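(* Let $U,V$ be nonempty sets, $A$ a fuzzy subset of $U$ and $B$ a fuzzy subset of $V$. Let $\odot$ be a semi-overlap function having $1$ as neutral element and $\rightarrow$ its residual implication. Suppose $A$ is normal, i.e. there is $u_0\in U$ with $A(u_0)=1$. If $A^*=A$, then the fuzzy subset $B^*$ of $V$ defined by $$B^*(v)=\sup_{u\in U}\big\{A^*(u)\odot[(A^*(u)\rightarrow A(u))\odot(A(u)\rightarrow B(v))]\big\}$$ satisfies $B^*=B$.
   Context: A semi-overlap function is a function $\odot:[0,1]^2\to[0,1]$ such that for all $u,v\in[0,1]$: $u\odot v=v\odot u$; if $uv=0$ then $u\odot v=0$; if $uv=1$ then $u\odot v=1$; $\odot$ is increasing in each variable; and $\odot$ is left-continuous: $u\odot\sup_{i\in I}v_i=\sup_{i\in I}(u\odot v_i)$ for every $u$ and nonempty family $\{v_i\}_{i\in I}\subseteq[0,1]$. $1$ is a neutral element if $1\odot v=v$ for all $v$. The residual implication is $a\rightarrow b=\sup\{w\in[0,1]\mid a\odot w\le b\}$. A fuzzy subset of $U$ is a function $U\to[0,1]$. (The displayed $B^*$ is the FMP-solution of the quintuple implication principle for rule $A\rightarrow B$ and input $A^*$; the paper phrases the theorem as "the FMP problem satisfies the reversibility of QIP method".) *)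

theory Defs
  imports "HOL-Analysis.Analysis"
begin

text \<open>Semi-overlap functions on the unit interval [0,1], represented as real
functions of two arguments; only their values on [0,1] x [0,1] matter.\<close>

definition semi_overlap :: "(real \<Rightarrow> real \<Rightarrow> real) \<Rightarrow> bool" where
  "semi_overlap ov \<longleftrightarrow>
     (\<forall>u\<in>{0..1}. \<forall>v\<in>{0..1}. ov u v \<in> {0..1}) \<and>
     (\<forall>u\<in>{0..1}. \<forall>v\<in>{0..1}. ov u v = ov v u) \<and>
     (\<forall>u\<in>{0..1}. \<forall>v\<in>{0..1}. u * v = 0 \<longrightarrow> ov u v = 0) \<and>
     (\<forall>u\<in>{0..1}. \<forall>v\<in>{0..1}. u * v = 1 \<longrightarrow> ov u v = 1) \<and>
     (\<forall>u\<in>{0..1}. \<forall>v\<in>{0..1}. \<forall>w\<in>{0..1}. v \<le> w \<longrightarrow> ov u v \<le> ov u w) \<and>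
     (\<forall>u\<in>{0..1}. \<forall>v\<in>{0..1}. \<forall>w\<in>{0..1}. u \<le> w \<longrightarrow> ov u v \<le> ov w v) \<and>
     (\<forall>u\<in>{0..1}. \<forall>S. S \<noteq> {} \<and> S \<subseteq> {0..1} \<longrightarrow> ov u (Sup S) = (SUP v\<in>S. ov u v))"

definition one_neutral :: "(real \<Rightarrow> real \<Rightarrow> real) \<Rightarrow> bool" where
  "one_neutral ov \<longleftrightarrow> (\<forall>v\<in>{0..1}. ov 1 v = v)"

definition residual :: "(real \<Rightarrow> real \<Rightarrow> real) \<Rightarrow> real \<Rightarrow> real \<Rightarrow> real" where
  "residual ov a b = Sup {w \<in> {0..1}. ov a w \<le> b}"

definition fuzzy_subset :: "'a set \<Rightarrow> ('a \<Rightarrow> real) \<Rightarrow> bool" where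
  "fuzzy_subset X A \<longleftrightarrow> (\<forall>x\<in>X. A x \<in> {0..1})"

definition qip_fmp :: "(real \<Rightarrow> real \<Rightarrow> real) \<Rightarrow> 'a set \<Rightarrow> ('a \<Rightarrow> real) \<Rightarrow> ('b \<Rightarrow> real)
    \<Rightarrow> ('a \<Rightarrow> real) \<Rightarrow> 'b \<Rightarrow> real" where
  "qip_fmp ov U A B Astar v =
     (SUP u\<in>U. ov (Astar u) (ov (residual ov (Astar u) (A u)) (residual ov (A u) (B v))))"

end

theory Submission
  imports Defs
begin

lemma res_in:
  assumes so: "semi_overlap ov" and a: "a \<in> {0..1}" and b: "b \<in> {0..1}"
  shows "residual ov a b \<in> {0..1}"
proof -
  let ?S = "{w \<in> {0..1}. ov a w \<le> b}"
  have z0: "\<forall>u\<in>{0..1}. \<forall>v\<in>{0..1}. u * v = 0 \<longrightarrow> ov u v = 0"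
    using so unfolding semi_overlap_def by (elim conjE) assumption
  have zin: "(0::real) \<in> {0..1}" by simp
  have z: "ov a 0 = 0" using bspec[OF bspec[OF z0 a] zin] by simp
  have "0 \<in> ?S" using z b by auto
  moreover have "bdd_above ?S" by (rule bdd_aboveI[of _ 1]) auto
  ultimately have "0 \<le> Sup ?S" "Sup ?S \<le> 1"
    by (auto intro: cSup_upper cSup_least)
  thus ?thesis unfolding residual_def by auto
qed

lemma res_le:
  assumes so: "semi_overlap ov" and a: "a \<in> {0..1}" and b: "b \<in> {0..1}"
  shows "ov a (residual ov a b) \<le> b"
proof -
  let ?S = "{w \<in> {0..1}. ov a w \<le> b}"
  have z0: "\<forall>u\<in>{0..1}. \<forall>v\<in>{0..1}. u * v = 0 \<longrightarrow> ov u v = 0"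
    using so unfolding semi_overlap_def by (elim conjE) assumption
  have zin: "(0::real) \<in> {0..1}" by simp
  have z: "ov a 0 = 0" using bspec[OF bspec[OF z0 a] zin] by simp
  have "0 \<in> ?S" using z b by simp
  hence ne: "?S \<noteq> {}" by blast
  have lc: "\<forall>u\<in>{0..1}. \<forall>S. S \<noteq> {} \<and> S \<subseteq> {0..1} \<longrightarrow> ov u (Sup S) = (SUP v\<in>S. ov u v)"
    using so unfolding semi_overlap_def by (elim conjE) assumption
  have sub: "?S \<noteq> {} \<and> ?S \<subseteq> {0..1}" using ne by blast
  have "ov a (Sup ?S) = (SUP w\<in>?S. ov a w)"
    using mp[OF spec[OF bspec[OF lc a]] sub] .
  also have "\<dots> \<le> b" using ne by (auto intro: cSUP_least)
  finally show ?thesis unfolding residual_def .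
qed

lemma res_self:
  assumes so: "semi_overlap ov" and n: "one_neutral ov" and a: "a \<in> {0..1}"
  shows "residual ov a a = 1"
proof -
  have "\<forall>w\<in>{0..1}. ov a w \<le> a"
  proof
    fix w :: real assume w: "w \<in> {0..1}"
    have m: "\<forall>u\<in>{0..1}. \<forall>v\<in>{0..1}. \<forall>w\<in>{0..1}. v \<le> w \<longrightarrow> ov u v \<le> ov u w"
      using so unfolding semi_overlap_def by (elim conjE) assumption
    have c: "\<forall>u\<in>{0..1}. \<forall>v\<in>{0..1}. ov u v = ov v u"
      using so unfolding semi_overlap_def by (elim conjE) assumption
    have one: "(1::real) \<in> {0..1}" by simp
    have "ov a w \<le> ov a 1" using mp[OF bspec[OF bspec[OF bspec[OF m a] w] one]] w by simp
    also have "ov a 1 = ov 1 a" using bspec[OF bspec[OF c a] one] .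
    also have "\<dots> = a" using n a unfolding one_neutral_def by blast
    finally show "ov a w \<le> a" .
  qed
  hence "{w \<in> {0..1}. ov a w \<le> a} = {0..1::real}" by auto
  thus ?thesis unfolding residual_def by simp
qed

lemma res_one:
  assumes n: "one_neutral ov" and b: "b \<in> {0..1}"
  shows "residual ov 1 b = b"
proof -
  have n1: "\<forall>v\<in>{0..1}. ov 1 v = v" using n unfolding one_neutral_def .
  have "{w \<in> {0..1}. ov 1 w \<le> b} = {0..b}"
  proof (rule set_eqI)
    fix w :: real
    show "w \<in> {w \<in> {0..1}. ov 1 w \<le> b} \<longleftrightarrow> w \<in> {0..b}"
    proof (cases "w \<in> {0..1}")
      case True thus ?thesis using bspec[OF n1 True] b by auto
    next
      case False thus ?thesis using b by auto
    qed
  qed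
  thus ?thesis unfolding residual_def using b by simp
qed

theorem theorem4p4:
  fixes ov :: "real \<Rightarrow> real \<Rightarrow> real"
    and U :: "'a set" and V :: "'b set"
    and A Astar :: "'a \<Rightarrow> real" and B :: "'b \<Rightarrow> real"
  assumes "U \<noteq> {}" and "V \<noteq> {}"
    and "fuzzy_subset U A" and "fuzzy_subset V B"
    and "semi_overlap ov" and "one_neutral ov"
    and "\<exists>u0\<in>U. A u0 = 1"
    and "Astar = A"
  shows "\<forall>v\<in>V. qip_fmp ov U A B Astar v = B v"
proof
  fix v assume v: "v \<in> V"
  note so = assms(5) and n = assms(6)
  have bv: "B v \<in> {0..1}" using assms(4) v unfolding fuzzy_subset_def by auto
  obtain u0 where u0: "u0 \<in> U" "A u0 = 1" using assms(7) by blast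
  have eq: "ov (A u) (ov (residual ov (A u) (A u)) (residual ov (A u) (B v)))
        = ov (A u) (residual ov (A u) (B v))" if u: "u \<in> U" for u
  proof -
    have au: "A u \<in> {0..1}" using assms(3) u unfolding fuzzy_subset_def by auto
    have n1: "\<forall>v\<in>{0..1}. ov 1 v = v" using n unfolding one_neutral_def .
    show ?thesis unfolding res_self[OF so n au] bspec[OF n1 res_in[OF so au bv]] ..
  qed
  have le: "ov (A u) (residual ov (A u) (B v)) \<le> B v" if u: "u \<in> U" for u
  proof -
    have au: "A u \<in> {0..1}" using assms(3) u unfolding fuzzy_subset_def by auto
    show ?thesis using res_le[OF so au bv] .
  qed
  have at: "ov (A u0) (residual ov (A u0) (B v)) = B v"
  proof -
    have n1: "\<forall>v\<in>{0..1}. ov 1 v = v" using n unfolding one_neutral_def .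
    show ?thesis unfolding u0(2) res_one[OF n bv] bspec[OF n1 bv] ..
  qed
  have "qip_fmp ov U A B Astar v = (SUP u\<in>U. ov (A u) (residual ov (A u) (B v)))"
    unfolding qip_fmp_def assms(8) by (rule SUP_cong[OF refl eq])
  also have "\<dots> = B v"
  proof (rule antisym)
    show "(SUP u\<in>U. ov (A u) (residual ov (A u) (B v))) \<le> B v"
      by (rule cSUP_least[OF assms(1) le])
    have "bdd_above ((\<lambda>u. ov (A u) (residual ov (A u) (B v))) ` U)"
      using le by (intro bdd_aboveI2[where M="B v"]) auto
    hence "ov (A u0) (residual ov (A u0) (B v)) \<le> (SUP u\<in>U. ov (A u) (residual ov (A u) (B v)))"
      by (rule cSUP_upper[OF u0(1)])
    thus "B v \<le> (SUP u\<in>U. ov (A u) (residual ov (A u) (B v)))" using at by simp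
  qed
  finally show "qip_fmp ov U A B Astar v = B v" .
qed

end
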